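(* Let $n\ge 3$, $0<m<\frac{n-2}{n}$, $m\ne\frac{n-2}{n+2}$, $\beta>0$, $\lambda>0$. Let $v$ be the radially symmetric solution described in the context, $w(s)=r^2v(r)^{1-m}$ with $s=\log r$, and $h(s)=w(s)-\frac{2(n-1)(n-2-nm)}{(1-m)\beta}s$. Then \[ \lim_{s\to\infty}\frac{h(s)}{\log s}=\lim_{s\to\infty}s\,h_s(s)=-\frac{(n-1)[n-2-(n+2)m]}{(1-m)\beta}. \]
   Context: $v=v(r)$, $r=|x|$, is the unique radially symmetric positive classical solution of $\frac{n-1}{m}\Delta v^m+\frac{2\beta}{1-m}v+\beta x\cdot\nabla v=0$ in $\mathbb{R}^n$ with $v(0)=\lambda$. *)

theory Defs
  imports "HOL-Analysis.Analysis"
begin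

definition partial :: "'n::finite \<Rightarrow> (real^'n \<Rightarrow> real) \<Rightarrow> real^'n \<Rightarrow> real" where
  "partial i f x = frechet_derivative f (at x) (axis i 1)"

definition C2_UNIV :: "(real^'n::finite \<Rightarrow> real) \<Rightarrow> bool" where
  "C2_UNIV f \<longleftrightarrow> (\<forall>x. f differentiable (at x)) \<and>
     (\<forall>i x. (partial i f) differentiable (at x)) \<and>
     (\<forall>i j. continuous_on UNIV (partial j (partial i f)))"

definition laplacian :: "(real^'n::finite \<Rightarrow> real) \<Rightarrow> real^'n \<Rightarrow> real" where
  "laplacian f x = (\<Sum>i\<in>UNIV. partial i (partial i f) x)"

definition radial_deriv :: "(real^'n::finite \<Rightarrow> real) \<Rightarrow> real^'n \<Rightarrow> real" where
  "radial_deriv f x = (\<Sum>i\<in>UNIV. x $ i * partial i f x)"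

end

theory Submission
  imports Defs
begin

lemma radial_D1:
  fixes x :: "real^'n::finite" and \<phi> :: "real \<Rightarrow> real"
  assumes x: "x \<noteq> 0" and d: "(\<phi> has_real_derivative d1) (at (norm x))"
  shows "((\<lambda>y. \<phi> (norm y)) has_derivative (\<lambda>h. d1 * (h \<bullet> sgn x))) (at x)"
proof -
  have "((\<lambda>y. \<phi> (norm y)) has_derivative (\<lambda>h. (*) d1 (h \<bullet> sgn x))) (at x)"
    by (rule has_derivative_compose[OF has_derivative_norm[OF x]]) (use d in \<open>simp add: has_field_derivative_def\<close>)
  then show ?thesis by simp
qed

lemma sgn_axis: fixes x :: "real^'n::finite" shows "axis i 1 \<bullet> sgn x = x $ i / norm x"
  by (simp add: sgn_div_norm inner_axis' divide_inverse mult.commute)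

lemma radial_partial:
  fixes x :: "real^'n::finite" and \<phi> :: "real \<Rightarrow> real"
  assumes x: "x \<noteq> 0" and d: "(\<phi> has_real_derivative d1) (at (norm x))"
  shows "partial i (\<lambda>y. \<phi> (norm y)) x = d1 * x $ i / norm x"
proof -
  have "frechet_derivative (\<lambda>y. \<phi> (norm y)) (at x) = (\<lambda>h. d1 * (h \<bullet> sgn x))"
    using frechet_derivative_at[OF radial_D1[OF x d]] by simp
  then show ?thesis unfolding partial_def by (simp add: sgn_axis)
qed

lemma radial_D2:
  fixes x :: "real^'n::finite" and \<phi>1 :: "real \<Rightarrow> real"
  assumes x: "x \<noteq> 0" and d: "(\<phi>1 has_real_derivative d2) (at (norm x))"
  shows "((\<lambda>y. \<phi>1 (norm y) * y $ i / norm y) has_derivative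
     (\<lambda>h. d2 * (h \<bullet> sgn x) * x $ i / norm x + \<phi>1 (norm x) * h $ i / norm x
          - \<phi>1 (norm x) * x $ i * (h \<bullet> sgn x) / (norm x)^2)) (at x)"
proof -
  have n: "norm x \<noteq> 0" using x by simp
  have 1: "((\<lambda>y. \<phi>1 (norm y)) has_derivative (\<lambda>h. d2 * (h \<bullet> sgn x))) (at x)"
    by (rule radial_D1[OF x d])
  have 2: "((\<lambda>y. y $ i) has_derivative (\<lambda>h. h $ i)) (at x)"
    by (rule bounded_linear_imp_has_derivative) (rule bounded_linear_vec_nth)
  have 3: "((\<lambda>y. inverse (norm y)) has_derivative (\<lambda>h. - (inverse (norm x) * (h \<bullet> sgn x) * inverse (norm x)))) (at x)"
    by (rule Deriv.has_derivative_inverse[OF n has_derivative_norm[OF x], simplified])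
  have "((\<lambda>y. \<phi>1 (norm y) * y $ i * inverse (norm y)) has_derivative
     (\<lambda>h. (\<phi>1 (norm x) * x $ i) * (- (inverse (norm x) * (h \<bullet> sgn x) * inverse (norm x)))
        + (\<phi>1 (norm x) * h $ i + d2 * (h \<bullet> sgn x) * x $ i) * inverse (norm x))) (at x)"
    by (rule has_derivative_mult[OF has_derivative_mult[OF 1 2] 3])
  moreover have "(\<lambda>y. \<phi>1 (norm y) * y $ i / norm y) = (\<lambda>y. \<phi>1 (norm y) * y $ i * inverse (norm y))"
    by (simp add: divide_inverse)
  moreover have "(\<lambda>h. d2 * (h \<bullet> sgn x) * x $ i / norm x + \<phi>1 (norm x) * h $ i / norm x
          - \<phi>1 (norm x) * x $ i * (h \<bullet> sgn x) / (norm x)^2) =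
     (\<lambda>h. (\<phi>1 (norm x) * x $ i) * (- (inverse (norm x) * (h \<bullet> sgn x) * inverse (norm x)))
        + (\<phi>1 (norm x) * h $ i + d2 * (h \<bullet> sgn x) * x $ i) * inverse (norm x))"
    using n by (intro ext) (simp add: field_simps power2_eq_square)
  ultimately show ?thesis by simp
qed

lemma sum_sq_norm: fixes x :: "real^'n::finite" shows "(\<Sum>i\<in>UNIV. x $ i * x $ i) = (norm x)^2"
  unfolding power2_norm_eq_inner inner_vec_def by simp

lemma radial_partial2:
  fixes x :: "real^'n::finite" and \<phi> \<phi>1 :: "real \<Rightarrow> real"
  assumes x: "x \<noteq> 0" and d1: "\<And>t. t > 0 \<Longrightarrow> (\<phi> has_real_derivative \<phi>1 t) (at t)"
    and d2: "(\<phi>1 has_real_derivative d2) (at (norm x))"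
  shows "partial i (partial i (\<lambda>y. \<phi> (norm y))) x
     = d2 * (x $ i * x $ i) / (norm x)^2 + \<phi>1 (norm x) / norm x - \<phi>1 (norm x) * (x $ i * x $ i) / (norm x)^3"
proof -
  have eq: "partial i (\<lambda>y. \<phi> (norm y)) y = \<phi>1 (norm y) * y $ i / norm y" if "y \<in> - {0}" for y
    using that by (intro radial_partial) (auto intro: d1)
  have "(partial i (\<lambda>y. \<phi> (norm y)) has_derivative
     (\<lambda>h. d2 * (h \<bullet> sgn x) * x $ i / norm x + \<phi>1 (norm x) * h $ i / norm x
          - \<phi>1 (norm x) * x $ i * (h \<bullet> sgn x) / (norm x)^2)) (at x)"
    by (rule has_derivative_transform_within_open[OF radial_D2[OF x d2], of "-{0}"]) (use x eq in auto)
  from frechet_derivative_at[OF this, symmetric]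
  have "partial i (partial i (\<lambda>y. \<phi> (norm y))) x = d2 * (axis i 1 \<bullet> sgn x) * x $ i / norm x + \<phi>1 (norm x) * (axis i 1::real^'n) $ i / norm x
          - \<phi>1 (norm x) * x $ i * (axis i 1 \<bullet> sgn x) / (norm x)^2"
    unfolding partial_def[of i "partial i (\<lambda>y. \<phi> (norm y))" x] by simp
  then show ?thesis using x
    by (simp add: sgn_axis field_simps power2_eq_square power3_eq_cube)
qed

lemma radial_laplacian:
  fixes x :: "real^'n::finite" and \<phi> \<phi>1 :: "real \<Rightarrow> real"
  assumes x: "x \<noteq> 0" and d1: "\<And>t. t > 0 \<Longrightarrow> (\<phi> has_real_derivative \<phi>1 t) (at t)"
    and d2: "(\<phi>1 has_real_derivative d2) (at (norm x))"
  shows "laplacian (\<lambda>y. \<phi> (norm y)) x = d2 + (real CARD('n) - 1) / norm x * \<phi>1 (norm x)"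
proof -
  have n: "norm x > 0" using x by simp
  have "laplacian (\<lambda>y. \<phi> (norm y)) x = (\<Sum>i\<in>UNIV. d2 * (x $ i * x $ i) / (norm x)^2 + \<phi>1 (norm x) / norm x - \<phi>1 (norm x) * (x $ i * x $ i) / (norm x)^3)"
    unfolding laplacian_def using radial_partial2[OF x d1 d2] by simp
  also have "\<dots> = d2 * (\<Sum>i\<in>UNIV. x $ i * x $ i) / (norm x)^2 + real CARD('n) * (\<phi>1 (norm x) / norm x) - \<phi>1 (norm x) * (\<Sum>i\<in>UNIV. x $ i * x $ i) / (norm x)^3"
    by (simp add: sum_subtractf sum.distrib sum_divide_distrib[symmetric] sum_distrib_left)
  also have "\<dots> = d2 + (real CARD('n) - 1) / norm x * \<phi>1 (norm x)"
    unfolding sum_sq_norm using n by (simp add: field_simps power2_eq_square power3_eq_cube)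
  finally show ?thesis .
qed

lemma radial_rd:
  fixes x :: "real^'n::finite" and \<phi> :: "real \<Rightarrow> real"
  assumes x: "x \<noteq> 0" and d: "(\<phi> has_real_derivative d1) (at (norm x))"
  shows "radial_deriv (\<lambda>y. \<phi> (norm y)) x = norm x * d1"
proof -
  have n: "norm x > 0" using x by simp
  have "radial_deriv (\<lambda>y. \<phi> (norm y)) x = (\<Sum>i\<in>UNIV. (x $ i * x $ i) * (d1 / norm x))"
    unfolding radial_deriv_def using radial_partial[OF x d] by (simp add: field_simps)
  also have "\<dots> = norm x * d1" unfolding sum_distrib_right[symmetric] sum_sq_norm using n
    by (simp add: field_simps power2_eq_square)
  finally show ?thesis .
qed

lemma line_deriv:
  fixes g :: "real^'n::finite \<Rightarrow> real" and e :: "real^'n"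
  assumes "g differentiable (at (t *\<^sub>R e))"
  shows "((\<lambda>\<tau>. g (\<tau> *\<^sub>R e)) has_real_derivative frechet_derivative g (at (t *\<^sub>R e)) e) (at t)"
proof -
  have g: "(g has_derivative frechet_derivative g (at (t *\<^sub>R e))) (at (t *\<^sub>R e))"
    using assms frechet_derivative_works by blast
  have l: "((\<lambda>\<tau>::real. \<tau> *\<^sub>R e) has_derivative (\<lambda>h. h *\<^sub>R e)) (at t)"
    by (intro derivative_eq_intros) auto
  have "((\<lambda>\<tau>. g (\<tau> *\<^sub>R e)) has_derivative (\<lambda>h. frechet_derivative g (at (t *\<^sub>R e)) (h *\<^sub>R e))) (at t)"
    by (rule has_derivative_compose[OF l g])
  moreover have "(\<lambda>h. frechet_derivative g (at (t *\<^sub>R e)) (h *\<^sub>R e)) = (\<lambda>h. frechet_derivative g (at (t *\<^sub>R e)) e * h)"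
    using linear_simps(5)[OF has_derivative_bounded_linear[OF g]] by (auto simp: mult.commute)
  ultimately show ?thesis by (simp add: has_field_derivative_def)
qed

lemma v_deriv:
  fixes v :: "real \<Rightarrow> real" and i :: "'n::finite"
  assumes C2: "C2_UNIV (\<lambda>x::real^'n. v (norm x))" and t: "t > 0"
  shows "(v has_real_derivative partial i (\<lambda>x::real^'n. v (norm x)) (t *\<^sub>R axis i 1)) (at t)"
proof -
  let ?f = "\<lambda>x::real^'n. v (norm x)"
  have "?f differentiable (at (t *\<^sub>R axis i 1))" using C2 unfolding C2_UNIV_def by blast
  from line_deriv[OF this] have "((\<lambda>\<tau>. ?f (\<tau> *\<^sub>R axis i 1)) has_real_derivative partial i ?f (t *\<^sub>R axis i 1)) (at t)"
    unfolding partial_def .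
  then show ?thesis unfolding has_field_derivative_def
    by (rule has_derivative_transform_within_open[of _ _ _ _ "{0<..}"]) (use t in \<open>auto simp: norm_axis_1\<close>)
qed

lemma v1_deriv:
  fixes v :: "real \<Rightarrow> real" and i :: "'n::finite"
  assumes C2: "C2_UNIV (\<lambda>x::real^'n. v (norm x))"
  shows "((\<lambda>t. partial i (\<lambda>x::real^'n. v (norm x)) (t *\<^sub>R axis i 1)) has_real_derivative
        partial i (partial i (\<lambda>x::real^'n. v (norm x))) (t *\<^sub>R axis i 1)) (at t)"
proof -
  let ?f = "\<lambda>x::real^'n. v (norm x)"
  have "partial i ?f differentiable (at (t *\<^sub>R axis i 1))" using C2 unfolding C2_UNIV_def by blast
  from line_deriv[OF this] show ?thesis unfolding partial_def[of i "partial i ?f"] .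
qed

lemma alg_A: fixes N m R V Vm v1 v2 \<beta> :: real
  assumes R: "R > 0" and V: "V > 0" and Vm: "Vm > 0" and m0: "0 < m" and m1: "m < 1"
  and o: "(N - 1) / m * ((m * (m - 1) * (Vm / V^2) * v1^2 + m * (Vm / V) * v2)
        + (N - 1) / R * (m * (Vm / V) * v1)) + 2 * \<beta> / (1 - m) * V + \<beta> * (R * v1) = 0"
  shows "(N - 1) * ((m - 1) * (R * v1 / V)^2 + (R^2 * v2 / V) + (N - 1) * (R * v1 / V)) + \<beta> * (R^2 * V / Vm) * (2 / (1 - m) + (R * v1 / V)) = 0"
proof -
  have "R^2 / Vm * ((N - 1) / m * ((m * (m - 1) * (Vm / V^2) * v1^2 + m * (Vm / V) * v2)
        + (N - 1) / R * (m * (Vm / V) * v1)) + 2 * \<beta> / (1 - m) * V + \<beta> * (R * v1)) = 0"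
    by (metis o mult_zero_right)
  moreover have "R^2 / Vm * ((N - 1) / m * ((m * (m - 1) * (Vm / V^2) * v1^2 + m * (Vm / V) * v2)
        + (N - 1) / R * (m * (Vm / V) * v1)) + 2 * \<beta> / (1 - m) * V + \<beta> * (R * v1))
     = (N - 1) * ((m - 1) * (R * v1 / V)^2 + (R^2 * v2 / V) + (N - 1) * (R * v1 / V)) + \<beta> * (R^2 * V / Vm) * (2 / (1 - m) + (R * v1 / V))"
    using R V Vm m0 m1 by (simp add: field_simps power2_eq_square)
  ultimately show ?thesis by metis
qed

lemma alg_B: fixes N m p T W \<beta> Q :: real assumes N1: "N > 1"
  and o2: "(N - 1) * ((m - 1) * p^2 + T + (N - 1) * p) + \<beta> * W * Q = 0"
  shows "T = (1 - m) * p^2 - (N - 1) * p - \<beta> / (N - 1) * W * Q"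
proof -
  have "(N - 1) * (T - ((1 - m) * p^2 - (N - 1) * p)) = - \<beta> * W * Q" using o2 by algebra
  then have "T - ((1 - m) * p^2 - (N - 1) * p) = - \<beta> * W * Q / (N - 1)" using N1
    by (simp add: field_simps)
  then show ?thesis by (simp add: algebra_simps)
qed

lemma alg_C: fixes N m p W c :: real assumes m0: "0 < m" and m1: "m < 1"
  shows "(1 - m) * (p + ((1 - m) * p^2 - (N - 1) * p - c * W * (2 / (1 - m) + p)) - p^2)
     = (- (m / (1 - m)) * ((2 + (1 - m) * p) - 2)^2 - (N - 2) * ((2 + (1 - m) * p) - 2) - c * W * (2 + (1 - m) * p))"
  using m0 m1 by (simp add: field_simps power2_eq_square)

lemma s_system:
  fixes v v1 v2 :: "real \<Rightarrow> real" and m \<beta> N :: real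
  assumes pos: "\<And>t. t > 0 \<Longrightarrow> v t > 0"
    and d1: "\<And>t. t > 0 \<Longrightarrow> (v has_real_derivative v1 t) (at t)"
    and d2: "\<And>t. t > 0 \<Longrightarrow> (v1 has_real_derivative v2 t) (at t)"
    and m0: "0 < m" and m1: "m < 1" and N1: "N > 1"
    and ode: "\<And>t. t > 0 \<Longrightarrow> (N - 1) / m * ((m * (m - 1) * v t powr (m - 2) * (v1 t)^2 + m * v t powr (m - 1) * v2 t)
        + (N - 1) / t * (m * v t powr (m - 1) * v1 t)) + 2 * \<beta> / (1 - m) * v t + \<beta> * (t * v1 t) = 0"
  defines "w \<equiv> \<lambda>s. (exp s)^2 * v (exp s) powr (1 - m)"
    and "a \<equiv> \<lambda>s. 2 + (1 - m) * (exp s * v1 (exp s) / v (exp s))"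
  shows "(w has_real_derivative w s * a s) (at s)"
    and "(a has_real_derivative (- (m / (1 - m)) * (a s - 2)^2 - (N - 2) * (a s - 2) - \<beta> / (N - 1) * w s * a s)) (at s)"
proof -
  define R where "R = exp s"
  have R: "R > 0" unfolding R_def by simp
  define V where "V = v R"
  have V: "V > 0" unfolding V_def using pos R by simp
  have e: "(exp has_real_derivative R) (at s)" unfolding R_def by (rule DERIV_exp)
  have hv: "((\<lambda>s. v (exp s)) has_real_derivative v1 R * R) (at s)"
    using DERIV_chain2[OF d1[OF exp_gt_zero] DERIV_exp[of s]] unfolding R_def by simp
  have hv1: "((\<lambda>s. v1 (exp s)) has_real_derivative v2 R * R) (at s)"
    using DERIV_chain2[OF d2[OF exp_gt_zero] DERIV_exp[of s]] unfolding R_def by simp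
  have hvp: "((\<lambda>s. v (exp s) powr (1 - m)) has_real_derivative (1 - m) * V powr (1 - m - 1) * (v1 R * R)) (at s)"
    using DERIV_fun_powr[OF hv, of "1 - m"] V unfolding V_def R_def by simp
  have he2: "((\<lambda>s. (exp s)^2) has_real_derivative 2 * R * R) (at s)"
    using DERIV_pow[of 2 s] DERIV_chain2[OF _ e, of "\<lambda>x. x^2" "2 * R"] unfolding R_def
    by (auto intro!: derivative_eq_intros simp: power2_eq_square)
  have "(w has_real_derivative (2 * R * R) * V powr (1 - m) + R^2 * ((1 - m) * V powr (1 - m - 1) * (v1 R * R))) (at s)"
    unfolding w_def using DERIV_mult[OF he2 hvp] unfolding V_def R_def by (simp add: ac_simps)
  moreover have "(2 * R * R) * V powr (1 - m) + R^2 * ((1 - m) * V powr (1 - m - 1) * (v1 R * R)) = w s * a s"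
  proof -
    define Vp where "Vp = V powr (- m)"
    have e: "V powr (1 - m) = V * Vp" unfolding Vp_def using V by (simp add: powr_add[symmetric] powr_mult_base)
    have e2: "V powr (1 - m - 1) = Vp" unfolding Vp_def by simp
    have "2*R*R*(V*Vp) + R^2*((1-m)*Vp*(v1 R * R)) = (R^2*(V*Vp)) * (2 + (1-m)*(R * v1 R / V))"
      using V by (simp add: field_simps power2_eq_square)
    then show ?thesis unfolding w_def a_def R_def[symmetric] V_def[symmetric] e e2 by simp
  qed
  ultimately show "(w has_real_derivative w s * a s) (at s)" by simp
  have hq: "((\<lambda>s. exp s * v1 (exp s) / v (exp s)) has_real_derivative
      ((R * v1 R + R * (v2 R * R)) * V - R * v1 R * (v1 R * R)) / (V * V)) (at s)"
    using DERIV_divide[OF DERIV_mult[OF e hv1] hv] V unfolding V_def R_def by (simp add: ac_simps)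
  have "(a has_real_derivative (1 - m) * (((R * v1 R + R * (v2 R * R)) * V - R * v1 R * (v1 R * R)) / (V * V))) (at s)"
    unfolding a_def using DERIV_add[OF DERIV_const DERIV_cmult[OF hq]] by simp
  moreover have "(1 - m) * (((R * v1 R + R * (v2 R * R)) * V - R * v1 R * (v1 R * R)) / (V * V))
     = (- (m / (1 - m)) * (a s - 2)^2 - (N - 2) * (a s - 2) - \<beta> / (N - 1) * w s * a s)"
  proof -
    define Vm where "Vm = V powr m"
    have Vm: "Vm > 0" unfolding Vm_def using V by simp
    have p1: "V powr (m - 1) = Vm / V" unfolding Vm_def using V by (simp add: powr_diff)
    have p2: "V powr (m - 2) = Vm / V^2" unfolding Vm_def using V by (simp add: powr_diff)
    have p3: "V powr (1 - m) = V / Vm" unfolding Vm_def using V by (simp add: powr_diff)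
    have o: "(N - 1) / m * ((m * (m - 1) * (Vm / V^2) * (v1 R)^2 + m * (Vm / V) * v2 R)
        + (N - 1) / R * (m * (Vm / V) * v1 R)) + 2 * \<beta> / (1 - m) * V + \<beta> * (R * v1 R) = 0"
      using ode[OF R] unfolding V_def[symmetric] p1 p2 .
    define p where "p = R * v1 R / V"
    define T where "T = R^2 * v2 R / V"
    define W where "W = R^2 * V / Vm"
    have o2: "(N - 1) * ((m - 1) * p^2 + T + (N - 1) * p) + \<beta> * W * (2 / (1 - m) + p) = 0"
      unfolding p_def T_def W_def by (rule alg_A[OF R V Vm m0 m1 o])
    have ws: "w s = W" unfolding w_def W_def R_def[symmetric] V_def[symmetric] p3 by simp
    have as: "a s = 2 + (1 - m) * p" unfolding a_def p_def R_def[symmetric] V_def[symmetric] by simp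
    have lhs: "(1 - m) * (((R * v1 R + R * (v2 R * R)) * V - R * v1 R * (v1 R * R)) / (V * V)) = (1 - m) * (p + T - p^2)"
      unfolding p_def T_def using V by (simp add: field_simps power2_eq_square)
    have T: "T = (1 - m) * p^2 - (N - 1) * p - \<beta> / (N - 1) * W * (2 / (1 - m) + p)"
      by (rule alg_B[OF N1 o2])
    show ?thesis unfolding lhs ws as T by (rule alg_C[OF m0 m1])
  qed
  ultimately show "(a has_real_derivative (- (m / (1 - m)) * (a s - 2)^2 - (N - 2) * (a s - 2) - \<beta> / (N - 1) * w s * a s)) (at s)"
    by simp
qed

lemma stay_above:
  fixes f f' :: "real \<Rightarrow> real"
  assumes d: "\<And>t. t \<ge> t0 \<Longrightarrow> (f has_real_derivative f' t) (at t)"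
    and pos: "\<And>t. t \<ge> t0 \<Longrightarrow> f t \<le> L \<Longrightarrow> f' t > 0"
    and st: "f t0 \<ge> L"
  shows "\<And>t. t \<ge> t0 \<Longrightarrow> f t \<ge> L"
proof (rule ccontr)
  fix t1 assume t1: "t1 \<ge> t0" and "\<not> f t1 \<ge> L"
  then have ft1: "f t1 < L" by simp
  have cont: "continuous_on {t0..t1} f"
    by (rule continuous_at_imp_continuous_on) (metis atLeastAtMost_iff DERIV_isCont d)
  obtain tm where tm: "tm \<in> {t0..t1}" and mn: "\<And>y. y \<in> {t0..t1} \<Longrightarrow> f tm \<le> f y"
    using continuous_attains_inf[OF compact_Icc _ cont] t1 by auto
  have "f tm \<le> f t1" using mn t1 by auto
  with ft1 have ftm: "f tm < L" by simp
  with st have "tm \<noteq> t0" by auto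
  with tm have tm0: "tm > t0" by auto
  have "f' tm > 0" using pos[of tm] tm ftm by auto
  from DERIV_pos_inc_left[OF d[of tm] this] tm obtain dd where dd: "dd > 0"
    and dec: "\<And>h. h > 0 \<Longrightarrow> h < dd \<Longrightarrow> f (tm - h) < f tm" by auto
  define h where "h = min (dd / 2) (tm - t0)"
  have h: "h > 0" "h < dd" using dd tm0 unfolding h_def by auto
  have "tm - h \<in> {t0..t1}" using tm h unfolding h_def by auto
  with mn have "f tm \<le> f (tm - h)" by auto
  with dec[OF h] show False by simp
qed

lemma lin_lower:
  fixes f f' :: "real \<Rightarrow> real"
  assumes d: "\<And>t. t \<ge> t0 \<Longrightarrow> (f has_real_derivative f' t) (at t)"
    and ge: "\<And>t. t \<ge> t0 \<Longrightarrow> f' t \<ge> \<delta>"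
    and t: "t \<ge> t0"
  shows "f t \<ge> f t0 + \<delta> * (t - t0)"
proof (cases "t = t0")
  case False
  then have "t0 < t" using t by simp
  from MVT2[OF this, of f f'] d obtain z where z: "t0 < z" "z < t" and eq: "f t - f t0 = (t - t0) * f' z"
    by auto
  have "(t - t0) * f' z \<ge> (t - t0) * \<delta>" using ge[of z] z by (intro mult_left_mono) auto
  then show ?thesis using eq by (simp add: algebra_simps)
qed simp

lemma trap:
  fixes f f' :: "real \<Rightarrow> real"
  assumes d: "\<And>t. t \<ge> t0 \<Longrightarrow> (f has_real_derivative f' t) (at t)"
    and pos: "\<And>t. t \<ge> t0 \<Longrightarrow> f t \<le> L \<Longrightarrow> f' t \<ge> \<delta>"
    and \<delta>: "\<delta> > 0"
  shows "\<exists>t1\<ge>t0. \<forall>t\<ge>t1. f t \<ge> L"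
proof -
  have "\<exists>t1\<ge>t0. f t1 \<ge> L"
  proof (rule ccontr)
    assume "\<not> ?thesis"
    then have lt: "\<And>t. t \<ge> t0 \<Longrightarrow> f t < L" by (meson not_le)
    define t where "t = t0 + (L - f t0) / \<delta> + 1"
    have "L - f t0 > 0" using lt[of t0] by simp
    then have tt: "t \<ge> t0" unfolding t_def using \<delta> by simp
    have ge: "f' s \<ge> \<delta>" if "s \<ge> t0" for s
      using pos[of s] lt[of s] that by simp
    have "f t \<ge> f t0 + \<delta> * (t - t0)"
      by (rule lin_lower[OF d ge tt])
    also have "\<delta> * (t - t0) = (L - f t0) + \<delta>" unfolding t_def using \<delta> by (simp add: field_simps)
    finally have "f t \<ge> L + \<delta>" by simp
    with lt[OF tt] \<delta> show False by simp
  qed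
  then obtain t1 where t1: "t1 \<ge> t0" "f t1 \<ge> L" by auto
  have "f t \<ge> L" if tt: "t \<ge> t1" for t
  proof (rule stay_above[of t1 f f' L, OF _ _ t1(2) tt])
    fix s assume s: "s \<ge> t1"
    then have s0: "s \<ge> t0" using t1(1) by linarith
    show "(f has_real_derivative f' s) (at s)" by (rule d[OF s0])
    assume "f s \<le> L"
    then have "f' s \<ge> \<delta>" by (rule pos[OF s0])
    then show "f' s > 0" using \<delta> by linarith
  qed
  then have "\<forall>t\<ge>t1. f t \<ge> L" by blast
  with t1 show ?thesis by auto
qed

lemma attract_lower:
  fixes y w \<psi> :: "real \<Rightarrow> real"
  assumes d: "\<And>t. t \<ge> t0 \<Longrightarrow> (y has_real_derivative w t * (\<psi> t - c * y t)) (at t)"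
    and w: "filterlim w at_top at_top" and \<psi>: "(\<psi> \<longlongrightarrow> L) at_top" and c: "c > 0"
    and a0: "a0 < L / c"
  shows "eventually (\<lambda>t. a0 < y t) at_top"
proof -
  define \<epsilon> where "\<epsilon> = L / c - a0"
  have \<epsilon>: "\<epsilon> > 0" using a0 unfolding \<epsilon>_def by simp
  have "eventually (\<lambda>t. \<psi> t > L - c * \<epsilon> / 4) at_top"
    using \<psi> c \<epsilon> by (intro order_tendstoD) auto
  moreover have "eventually (\<lambda>t. w t \<ge> 1) at_top" using w by (simp add: filterlim_at_top)
  moreover have "eventually (\<lambda>t. t \<ge> t0) at_top" by simp
  ultimately have "eventually (\<lambda>t. \<psi> t > L - c * \<epsilon> / 4 \<and> w t \<ge> 1 \<and> t \<ge> t0) at_top"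
    by eventually_elim auto
  then obtain s1 where s1: "\<And>t. t \<ge> s1 \<Longrightarrow> \<psi> t > L - c * \<epsilon> / 4 \<and> w t \<ge> 1 \<and> t \<ge> t0"
    by (auto simp: eventually_at_top_linorder)
  have "\<exists>t1\<ge>s1. \<forall>t\<ge>t1. y t \<ge> a0 + \<epsilon> / 2"
  proof (rule trap[of s1 y "\<lambda>t. w t * (\<psi> t - c * y t)" _ "c * \<epsilon> / 4"])
    show "\<And>t. s1 \<le> t \<Longrightarrow> (y has_real_derivative w t * (\<psi> t - c * y t)) (at t)"
      using d s1 by blast
    show "0 < c * \<epsilon> / 4" using c \<epsilon> by simp
    fix t assume t: "s1 \<le> t" and yt: "y t \<le> a0 + \<epsilon> / 2"
    have "\<psi> t - c * y t \<ge> L - c * \<epsilon> / 4 - c * (a0 + \<epsilon> / 2)"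
    proof -
      have "c * y t \<le> c * (a0 + \<epsilon> / 2)" using yt c by (intro mult_left_mono) auto
      then show ?thesis using s1[OF t] by linarith
    qed
    also have "L - c * \<epsilon> / 4 - c * (a0 + \<epsilon> / 2) = c * \<epsilon> / 4"
      unfolding \<epsilon>_def using c by (simp add: field_simps)
    finally have 1: "\<psi> t - c * y t \<ge> c * \<epsilon> / 4" .
    have "w t * (\<psi> t - c * y t) \<ge> 1 * (c * \<epsilon> / 4)"
      by (rule mult_mono) (use s1[OF t] 1 c \<epsilon> in auto)
    then show "c * \<epsilon> / 4 \<le> w t * (\<psi> t - c * y t)" by simp
  qed
  then obtain t1 where t1: "\<forall>t\<ge>t1. y t \<ge> a0 + \<epsilon> / 2" by auto
  have "\<forall>t\<ge>t1. a0 < y t"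
  proof (intro allI impI)
    fix t assume "t \<ge> t1"
    with t1 have "y t \<ge> a0 + \<epsilon> / 2" by blast
    then show "a0 < y t" using \<epsilon> by linarith
  qed
  then show ?thesis unfolding eventually_at_top_linorder by blast
qed

lemma attract:
  fixes y w \<psi> :: "real \<Rightarrow> real"
  assumes d: "\<And>t. t \<ge> t0 \<Longrightarrow> (y has_real_derivative w t * (\<psi> t - c * y t)) (at t)"
    and w: "filterlim w at_top at_top" and \<psi>: "(\<psi> \<longlongrightarrow> L) at_top" and c: "c > 0"
  shows "(y \<longlongrightarrow> L / c) at_top"
proof (rule order_tendstoI)
  fix a0 assume "a0 < L / c"
  then show "eventually (\<lambda>t. a0 < y t) at_top" using attract_lower[OF d w \<psi> c] by blast
next
  fix a0 assume a0: "L / c < a0"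
  have d': "((\<lambda>t. - y t) has_real_derivative w t * ((- \<psi> t) - c * (- y t))) (at t)" if "t \<ge> t0" for t
  proof -
    have "((\<lambda>t. - y t) has_real_derivative - (w t * (\<psi> t - c * y t))) (at t)"
      using d[OF that] by (rule DERIV_minus)
    moreover have "- (w t * (\<psi> t - c * y t)) = w t * ((- \<psi> t) - c * (- y t))" by (simp add: algebra_simps)
    ultimately show ?thesis by simp
  qed
  have "eventually (\<lambda>t. - a0 < - y t) at_top"
  proof (rule attract_lower[OF d' w tendsto_minus[OF \<psi>] c])
    have "- a0 < - (L / c)" using a0 by simp
    then show "- a0 < - L / c" by simp
  qed
  then show "eventually (\<lambda>t. y t < a0) at_top" by simp
qed

lemma alg_stepA:
  fixes \<mu> N cw a :: real
  assumes \<mu>: "\<mu> > 0" and NK: "N - 2 - 2 * \<mu> > 0" and G: "cw > (1 + \<mu>) * (2 - a)" and a: "a \<le> 0"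
  shows "- \<mu> * (a - 2)^2 - (N - 2) * (a - 2) - cw * a \<ge> 2 * (N - 2 - 2 * \<mu>)"
proof -
  define b where "b = 2 - a"
  have b2: "b \<ge> 2" using a unfolding b_def by simp
  have F: "- \<mu> * (a - 2)^2 - (N - 2) * (a - 2) - cw * a = - \<mu> * b^2 + (N - 2) * b + cw * (b - 2)"
    unfolding b_def by (simp add: algebra_simps power2_eq_square)
  have "cw * (b - 2) \<ge> ((1 + \<mu>) * b) * (b - 2)"
    by (rule mult_right_mono) (use G b2 in \<open>auto simp: b_def\<close>)
  then have "- \<mu> * b^2 + (N - 2) * b + cw * (b - 2) \<ge> - \<mu> * b^2 + (N - 2) * b + ((1 + \<mu>) * b) * (b - 2)"
    by simp
  moreover have "- \<mu> * b^2 + (N - 2) * b + ((1 + \<mu>) * b) * (b - 2) - 2 * (N - 2 - 2 * \<mu>) = (b - 2) * (b + N - 2 - 2 * \<mu>)"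
    by (simp add: algebra_simps power2_eq_square)
  moreover have "(b - 2) * (b + N - 2 - 2 * \<mu>) \<ge> 0" using b2 NK by simp
  ultimately show ?thesis unfolding F by linarith
qed

lemma alg_stepC:
  fixes \<mu> N c w a \<epsilon> Wb :: real
  assumes \<mu>: "\<mu> > 0" and c: "c > 0" and w: "0 < w" "w \<le> Wb" and a: "0 \<le> a" "a \<le> \<epsilon>" and e1: "\<epsilon> \<le> 1"
    and eD: "\<epsilon> * (\<mu> + \<bar>4 * \<mu> - N + 2\<bar> + c * Wb) \<le> (2 * (N - 2) - 4 * \<mu>) / 2"
  shows "- \<mu> * (a - 2)^2 - (N - 2) * (a - 2) - c * w * a \<ge> (2 * (N - 2) - 4 * \<mu>) / 2"
proof -
  have F: "- \<mu> * (a - 2)^2 - (N - 2) * (a - 2) - c * w * a = - (\<mu> * a^2) + (4 * \<mu> - N + 2) * a + (2 * (N - 2) - 4 * \<mu>) - c * w * a"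
    by (simp add: algebra_simps power2_eq_square)
  have 1: "\<mu> * a^2 \<le> \<mu> * \<epsilon>"
  proof -
    have "a^2 \<le> a * 1" unfolding power2_eq_square by (rule mult_left_mono) (use a e1 in auto)
    also have "\<dots> \<le> \<epsilon>" using a by simp
    finally show ?thesis using \<mu> by simp
  qed
  have 2: "(4 * \<mu> - N + 2) * a \<ge> - (\<bar>4 * \<mu> - N + 2\<bar> * \<epsilon>)"
  proof -
    have "\<bar>(4 * \<mu> - N + 2) * a\<bar> \<le> \<bar>4 * \<mu> - N + 2\<bar> * \<epsilon>"
      unfolding abs_mult using a by (intro mult_left_mono) auto
    then show ?thesis by linarith
  qed
  have 3: "c * w * a \<le> c * Wb * \<epsilon>"
    by (intro mult_mono) (use c w a in auto)
  define B where "B = \<bar>4 * \<mu> - N + 2\<bar>"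
  define K where "K = 2 * (N - 2) - 4 * \<mu>"
  have "\<epsilon> * (\<mu> + B + c * Wb) = \<mu> * \<epsilon> + B * \<epsilon> + c * Wb * \<epsilon>"
    by (simp add: algebra_simps)
  with eD have eD': "\<mu> * \<epsilon> + B * \<epsilon> + c * Wb * \<epsilon> \<le> K / 2" unfolding B_def K_def by simp
  have h2: "- (B * \<epsilon>) \<le> (4 * \<mu> - N + 2) * a" using 2 unfolding B_def .
  have "K / 2 \<le> - (\<mu> * a^2) + (4 * \<mu> - N + 2) * a + K - c * w * a"
    using 1 h2 3 eD' by linarith
  then show ?thesis unfolding F K_def by simp
qed

lemma alg_stepD:
  fixes \<mu> N x :: real assumes \<mu>: "\<mu> > 0"
  shows "- \<mu> * x^2 - (N - 2) * x \<le> (N - 2)^2 / (4 * \<mu>)"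
proof -
  have "0 \<le> \<mu> * (x + (N - 2) / (2 * \<mu>))^2" using \<mu> by simp
  also have "\<mu> * (x + (N - 2) / (2 * \<mu>))^2 = \<mu> * x^2 + (N - 2) * x + (N - 2)^2 / (4 * \<mu>)"
    using \<mu> by (simp add: field_simps power2_eq_square)
  finally show ?thesis by simp
qed

lemma asym:
  fixes w a :: "real \<Rightarrow> real" and \<mu> N c :: real
  assumes \<mu>: "\<mu> > 0" and c: "c > 0" and NK: "N - 2 - 2 * \<mu> > 0"
    and wpos: "\<And>s. w s > 0"
    and dw: "\<And>s. (w has_real_derivative w s * a s) (at s)"
    and da: "\<And>s. (a has_real_derivative (- \<mu> * (a s - 2)^2 - (N - 2) * (a s - 2) - c * w s * a s)) (at s)"
    and G: "\<And>s. c * w s > (1 + \<mu>) * (2 - a s)"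
  shows "((\<lambda>s. s * (w s * a s - (2 * (N - 2) - 4 * \<mu>) / c)) \<longlongrightarrow> - (N - 2 - 4 * \<mu>) / c) at_top"
proof -
  define K where "K = 2 * (N - 2) - 4 * \<mu>"
  have K: "K > 0" unfolding K_def using NK by simp
  define A where "A = K / c"
  have A: "A > 0" unfolding A_def using K c by simp
  define F where "F = (\<lambda>s. - \<mu> * (a s - 2)^2 - (N - 2) * (a s - 2) - c * w s * a s)"
  have da': "\<And>s. (a has_real_derivative F s) (at s)" unfolding F_def by (rule da)
  obtain s0 where s0: "\<And>s. s \<ge> s0 \<Longrightarrow> a s \<ge> 0"
  proof -
    have "\<exists>t1\<ge>0. \<forall>t\<ge>t1. a t \<ge> 0"
    proof (rule trap[of 0 a F 0 "2 * (N - 2 - 2 * \<mu>)"])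
      show "\<And>t. 0 \<le> t \<Longrightarrow> (a has_real_derivative F t) (at t)" using da' by blast
      show "0 < 2 * (N - 2 - 2 * \<mu>)" using NK by simp
      fix t assume "a t \<le> 0"
      then show "2 * (N - 2 - 2 * \<mu>) \<le> F t" unfolding F_def
        using alg_stepA[OF \<mu> NK G] by (simp add: mult.assoc)
    qed
    then show ?thesis using that by blast
  qed
  have wmono: "w x \<le> w y" if "s0 \<le> x" "x \<le> y" for x y
  proof -
    have "w y \<ge> w x + 0 * (y - x)"
    proof (rule lin_lower[of x w "\<lambda>s. w s * a s" 0 y])
      show "\<And>t. x \<le> t \<Longrightarrow> (w has_real_derivative w t * a t) (at t)" using dw by blast
      fix t assume "x \<le> t"
      then have "a t \<ge> 0" using s0[of t] that by simp
      then show "0 \<le> w t * a t" using wpos[of t] by simp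
    qed (use that in auto)
    then show ?thesis by simp
  qed
  have winf: "filterlim w at_top at_top"
  proof (rule ccontr)
    assume nl: "\<not> filterlim w at_top at_top"
    have "\<exists>Wb. \<forall>s\<ge>s0. w s \<le> Wb"
    proof (rule ccontr)
      assume "\<not> ?thesis"
      then have unb: "\<And>B. \<exists>s\<ge>s0. w s > B" by (auto simp: not_le)
      have "filterlim w at_top at_top"
        unfolding filterlim_at_top eventually_at_top_linorder
      proof
        fix Z
        obtain s where s: "s \<ge> s0" "w s > Z" using unb by blast
        have "\<forall>n\<ge>s. Z \<le> w n"
        proof (intro allI impI)
          fix n assume "s \<le> n"
          then have "w s \<le> w n" using wmono[of s n] s by simp
          then show "Z \<le> w n" using s by linarith
        qed
        then show "\<exists>N. \<forall>n\<ge>N. Z \<le> w n" by blast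
      qed
      with nl show False by simp
    qed
    then obtain Wb where Wb: "\<And>s. s \<ge> s0 \<Longrightarrow> w s \<le> Wb" by blast
    have Wb0: "Wb > 0" using Wb[of s0] wpos[of s0] by simp
    define D where "D = \<mu> + \<bar>4 * \<mu> - N + 2\<bar> + c * Wb"
    have D: "D > 0" unfolding D_def using \<mu> c Wb0 by (simp add: add_pos_nonneg)
    define \<epsilon> where "\<epsilon> = min 1 (K / (2 * D))"
    have \<epsilon>: "\<epsilon> > 0" "\<epsilon> \<le> 1" unfolding \<epsilon>_def using K D by auto
    have eD: "\<epsilon> * D \<le> K / 2"
    proof -
      have "\<epsilon> * D \<le> (K / (2 * D)) * D" using D unfolding \<epsilon>_def by (intro mult_right_mono) auto
      also have "\<dots> = K / 2" using D by simp
      finally show ?thesis .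
    qed
    have "\<exists>t1\<ge>s0. \<forall>t\<ge>t1. a t \<ge> \<epsilon>"
    proof (rule trap[of s0 a F \<epsilon> "K / 2"])
      show "\<And>t. s0 \<le> t \<Longrightarrow> (a has_real_derivative F t) (at t)" using da' by blast
      show "0 < K / 2" using K by simp
      fix t assume t: "s0 \<le> t" and at: "a t \<le> \<epsilon>"
      show "K / 2 \<le> F t" unfolding F_def K_def
        by (rule alg_stepC[OF \<mu> c wpos Wb[OF t] s0[OF t] at \<epsilon>(2)]) (use eD in \<open>simp add: D_def K_def\<close>)
    qed
    then obtain s1 where s1: "s1 \<ge> s0" "\<And>t. t \<ge> s1 \<Longrightarrow> a t \<ge> \<epsilon>" by blast
    define \<delta> where "\<delta> = \<epsilon> * w s1"
    have \<delta>: "\<delta> > 0" unfolding \<delta>_def using \<epsilon> wpos by simp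
    define T where "T = s1 + Wb / \<delta> + 1"
    have T: "T \<ge> s1" unfolding T_def using Wb0 \<delta> by simp
    have "w T \<ge> w s1 + \<delta> * (T - s1)"
    proof (rule lin_lower[of s1 w "\<lambda>s. w s * a s" \<delta> T])
      show "\<And>t. s1 \<le> t \<Longrightarrow> (w has_real_derivative w t * a t) (at t)" using dw by blast
      fix t assume t: "s1 \<le> t"
      have "w t \<ge> w s1" using wmono[of s1 t] s1 t by simp
      have "\<epsilon> * w s1 \<le> a t * w t"
        by (rule mult_mono) (use s1(2)[OF t] \<open>w t \<ge> w s1\<close> \<epsilon> wpos[of s1] in auto)
      then show "\<delta> \<le> w t * a t" unfolding \<delta>_def by (simp add: mult.commute)
    qed (use T in auto)
    also have "\<delta> * (T - s1) = Wb + \<delta>" unfolding T_def using \<delta> by (simp add: field_simps)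
    finally have "w T > Wb" using wpos[of s1] \<delta> by simp
    with Wb[of T] T s1 show False by simp
  qed
  have a0: "(a \<longlongrightarrow> 0) at_top"
  proof (rule order_tendstoI)
    fix e :: real assume "e < 0"
    then show "eventually (\<lambda>s. e < a s) at_top" unfolding eventually_at_top_linorder
      using s0 by (intro exI[of _ s0]) (meson le_less_trans not_le)
  next
    fix e :: real assume e: "0 < e"
    define Gm where "Gm = (N - 2)^2 / (4 * \<mu>)"
    have Gm0: "Gm \<ge> 0" unfolding Gm_def using \<mu> by simp
    have "eventually (\<lambda>s. w s \<ge> (Gm + 1) / (c * (e / 2))) at_top"
      using winf by (simp add: filterlim_at_top)
    then obtain s2 where s2: "\<And>s. s \<ge> s2 \<Longrightarrow> w s \<ge> (Gm + 1) / (c * (e / 2))"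
      by (auto simp: eventually_at_top_linorder)
    have "\<exists>t1\<ge>s2. \<forall>t\<ge>t1. - a t \<ge> - (e / 2)"
    proof (rule trap[of s2 "\<lambda>s. - a s" "\<lambda>s. - F s" "- (e / 2)" 1])
      show "\<And>t. s2 \<le> t \<Longrightarrow> ((\<lambda>s. - a s) has_real_derivative - F t) (at t)"
        using da' by (blast intro: DERIV_minus)
      fix t assume t: "s2 \<le> t" and at: "- a t \<le> - (e / 2)"
      have 1: "- \<mu> * (a t - 2)^2 - (N - 2) * (a t - 2) \<le> Gm" unfolding Gm_def by (rule alg_stepD[OF \<mu>])
      have "c * w t * a t \<ge> c * ((Gm + 1) / (c * (e / 2))) * (e / 2)"
        using s2[OF t] at c e Gm0 wpos[of t] by (intro mult_mono) auto
      also have "c * ((Gm + 1) / (c * (e / 2))) * (e / 2) = Gm + 1" using c e by (simp add: field_simps)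
      finally have "c * w t * a t \<ge> Gm + 1" .
      with 1 show "1 \<le> - F t" unfolding F_def by linarith
    qed simp
    then obtain t1 where "\<forall>t\<ge>t1. - a t \<ge> - (e / 2)" by blast
    then show "eventually (\<lambda>s. a s < e) at_top" unfolding eventually_at_top_linorder
      using e by (intro exI[of _ t1]) force
  qed
  define \<psi> where "\<psi> = (\<lambda>s. (a s)^2 - \<mu> * (a s - 2)^2 - (N - 2) * (a s - 2))"
  define P where "P = (\<lambda>s. w s * a s)"
  have dP: "(P has_real_derivative w s * (\<psi> s - c * P s)) (at s)" for s
  proof -
    have "(P has_real_derivative w s * a s * a s + F s * w s) (at s)"
      unfolding P_def by (rule DERIV_mult[OF dw da'])
    moreover have "w s * a s * a s + F s * w s = w s * (\<psi> s - c * P s)"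
      unfolding F_def \<psi>_def P_def by (simp add: algebra_simps power2_eq_square)
    ultimately show ?thesis by simp
  qed
  have \<psi>lim: "(\<psi> \<longlongrightarrow> K) at_top"
  proof -
    have "(\<psi> \<longlongrightarrow> 0^2 - \<mu> * (0 - 2)^2 - (N - 2) * (0 - 2)) at_top"
      unfolding \<psi>_def by (intro tendsto_intros a0)
    then show ?thesis unfolding K_def by (simp add: algebra_simps)
  qed
  have Plim: "(P \<longlongrightarrow> A) at_top"
    unfolding A_def by (rule attract[OF _ winf \<psi>lim c, of 0]) (rule dP)
  define \<kappa> where "\<kappa> = N - 2 - 4 * \<mu>"
  define Z where "Z = (\<lambda>s. w s * (P s - A))"
  define \<psi>2 where "\<psi>2 = (\<lambda>s. a s * (P s - A) + P s * ((1 - \<mu>) * a s - \<kappa>))"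
  have dZ: "(Z has_real_derivative w s * (\<psi>2 s - c * Z s)) (at s)" for s
  proof -
    have "(Z has_real_derivative w s * a s * (P s - A) + (w s * (\<psi> s - c * P s) - 0) * w s) (at s)"
      unfolding Z_def by (rule DERIV_mult[OF dw DERIV_diff[OF dP DERIV_const]])
    moreover have "w s * a s * (P s - A) + (w s * (\<psi> s - c * P s) - 0) * w s = w s * (\<psi>2 s - c * Z s)"
    proof -
      have cA: "c * A = K" unfolding A_def using c by simp
      have "\<psi> s - K = a s * ((1 - \<mu>) * a s - \<kappa>)"
        unfolding \<psi>_def K_def \<kappa>_def by (simp add: algebra_simps power2_eq_square)
      then have hX: "w s * (\<psi> s - c * P s) = P s * ((1 - \<mu>) * a s - \<kappa>) - c * Z s"
      proof -
        have "w s * (\<psi> s - c * P s) = w s * (\<psi> s - K) + w s * (K - c * P s)" by (simp add: algebra_simps)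
        also have "K - c * P s = - c * (P s - A)" using cA by (simp add: algebra_simps)
        finally show ?thesis unfolding P_def Z_def using \<open>\<psi> s - K = _\<close> by (simp add: algebra_simps)
      qed
      have "w s * a s * (P s - A) + (w s * (\<psi> s - c * P s) - 0) * w s
          = w s * a s * (P s - A) + (P s * ((1 - \<mu>) * a s - \<kappa>) - c * Z s) * w s"
        by (simp only: hX diff_zero)
      also have "\<dots> = w s * (\<psi>2 s - c * Z s)" unfolding \<psi>2_def P_def by (simp add: algebra_simps)
      finally show ?thesis .
    qed
    ultimately show ?thesis by simp
  qed
  have \<psi>2lim: "(\<psi>2 \<longlongrightarrow> 0 * (A - A) + A * ((1 - \<mu>) * 0 - \<kappa>)) at_top"
    unfolding \<psi>2_def by (intro tendsto_intros a0 Plim)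
  have Zlim0: "(Z \<longlongrightarrow> (0 * (A - A) + A * ((1 - \<mu>) * 0 - \<kappa>)) / c) at_top"
    by (rule attract[OF _ winf \<psi>2lim c, of 0]) (rule dZ)
  have eqZ: "(0 * (A - A) + A * ((1 - \<mu>) * 0 - \<kappa>)) / c = (- \<kappa> * A) / c" by simp
  have Zlim: "(Z \<longlongrightarrow> (- \<kappa> * A) / c) at_top"
    using Zlim0 unfolding eqZ .
  have wslim: "((\<lambda>s. w s / s) \<longlongrightarrow> A) at_top"
  proof (rule lhospital_at_top_at_top[of "\<lambda>x. x" "\<lambda>x. 1" w P])
    show "LIM x at_top. x :> at_top" by (rule filterlim_ident)
    show "eventually (\<lambda>x. (1::real) \<noteq> 0) at_top" by simp
    show "eventually (\<lambda>x. (w has_real_derivative P x) (at x)) at_top" unfolding P_def using dw by simp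
    show "eventually (\<lambda>x. ((\<lambda>x. x) has_real_derivative 1) (at x)) at_top" by (simp add: DERIV_ident)
    show "((\<lambda>x. P x / 1) \<longlongrightarrow> A) at_top" using Plim by simp
  qed
  have "((\<lambda>s. Z s / (w s / s)) \<longlongrightarrow> ((- \<kappa> * A) / c) / A) at_top"
    by (rule tendsto_divide[OF Zlim wslim]) (use A in simp)
  moreover have "eventually (\<lambda>s. Z s / (w s / s) = s * (w s * a s - (2 * (N - 2) - 4 * \<mu>) / c)) at_top"
  proof -
    have "eventually (\<lambda>s. s > (0::real)) at_top" by simp
    then show ?thesis
    proof eventually_elim
      case (elim s)
      then show ?case unfolding Z_def P_def A_def K_def using wpos[of s] by (simp add: field_simps)
    qed
  qed
  ultimately have "((\<lambda>s. s * (w s * a s - (2 * (N - 2) - 4 * \<mu>) / c)) \<longlongrightarrow> ((- \<kappa> * A) / c) / A) at_top"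
    by (rule Lim_transform_eventually)
  moreover have "((- \<kappa> * A) / c) / A = - (N - 2 - 4 * \<mu>) / c" unfolding \<kappa>_def using A by simp
  ultimately show ?thesis by simp
qed

lemma Gpos:
  fixes Gf Gd :: "real \<Rightarrow> real"
  assumes d: "\<And>r. r > 0 \<Longrightarrow> (Gf has_real_derivative Gd r) (at r)"
    and pos: "\<And>r. r > 0 \<Longrightarrow> Gd r > 0"
    and lim: "(Gf \<longlongrightarrow> 0) (at_right 0)"
    and r: "r > 0"
  shows "Gf r > 0"
proof (rule ccontr)
  assume "\<not> Gf r > 0"
  then have r0: "Gf r \<le> 0" by simp
  define r2 where "r2 = r / 2"
  have r2: "0 < r2" "r2 < r" unfolding r2_def using r by auto
  obtain z where z: "r2 < z" "z < r" and eq: "Gf r - Gf r2 = (r - r2) * Gd z"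
    using MVT2[OF r2(2), of Gf Gd] d r2 by force
  have "(r - r2) * Gd z > 0" using z r2 pos[of z] by simp
  with eq r0 have lt: "Gf r2 < 0" by linarith
  have "eventually (\<lambda>t. Gf r2 \<ge> Gf t) (at_right 0)"
  proof -
    have "eventually (\<lambda>t. t \<in> {0<..<r2}) (at_right (0::real))"
      using r2 by (intro eventually_at_right_real) auto
    then show ?thesis
    proof eventually_elim
      case (elim t)
      then have t: "0 < t" "t \<le> r2" by auto
      have "Gf r2 \<ge> Gf t + 0 * (r2 - t)"
      proof (rule lin_lower[of t Gf Gd 0 r2])
        show "\<And>s. t \<le> s \<Longrightarrow> (Gf has_real_derivative Gd s) (at s)" using d t by simp
        show "\<And>s. t \<le> s \<Longrightarrow> 0 \<le> Gd s" using pos t by (simp add: less_imp_le)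
      qed (use t in simp)
      then show ?case by simp
    qed
  qed
  from tendsto_upperbound[OF lim this] have "0 \<le> Gf r2" by simp
  with lt show False by simp
qed

lemma pow_k:
  fixes r :: real assumes "k \<ge> (3::nat)"
  shows "r ^ (k - 1) = r ^ (k - 2) * r" "r ^ k = r ^ (k - 2) * r * r"
proof -
  define j where "j = k - 2"
  have kj: "k = j + 2" using assms unfolding j_def by simp
  show "r ^ (k - 1) = r ^ (k - 2) * r" unfolding kj by (simp add: mult.commute)
  show "r ^ k = r ^ (k - 2) * r * r" unfolding kj by (simp add: mult.commute power2_eq_square power_add)
qed

theorem lemma2p3:
  fixes v :: "real \<Rightarrow> real" and m \<beta> lam :: real
    and w h :: "real \<Rightarrow> real"
  defines "n \<equiv> real CARD('n::finite)"
  assumes n3: "CARD('n) \<ge> 3"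
    and m_pos: "0 < m" and m_lt: "m < (n - 2) / n" and m_ne: "m \<noteq> (n - 2) / (n + 2)"
    and beta_pos: "\<beta> > 0" and lambda_pos: "lam > 0"
    and v_pos: "\<forall>r\<ge>0. v r > 0"
    and v0: "v 0 = lam"
    and C2: "C2_UNIV (\<lambda>x::real^'n. v (norm x))"
    and pde: "\<forall>x::real^'n.
       (n - 1) / m * laplacian (\<lambda>y. v (norm y) powr m) x
       + 2 * \<beta> / (1 - m) * v (norm x)
       + \<beta> * radial_deriv (\<lambda>y. v (norm y)) x = 0"
    and w_def: "\<forall>s. w s = (exp s)\<^sup>2 * v (exp s) powr (1 - m)"
    and h_def: "\<forall>s. h s = w s - 2 * (n - 1) * (n - 2 - n * m) / ((1 - m) * \<beta>) * s"
  shows "((\<lambda>s. h s / ln s) \<longlongrightarrow> - (n - 1) * (n - 2 - (n + 2) * m) / ((1 - m) * \<beta>)) at_top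
       \<and> ((\<lambda>s. s * deriv h s) \<longlongrightarrow> - (n - 1) * (n - 2 - (n + 2) * m) / ((1 - m) * \<beta>)) at_top"
proof -
  let ?f = "\<lambda>x::real^'n. v (norm x)"
  define k where "k = CARD('n)"
  have k3: "k \<ge> 3" unfolding k_def using n3 .
  have nk: "n = real k" unfolding n_def k_def ..
  have n3': "n \<ge> 3" unfolding nk using k3 by simp
  have m1: "m < 1"
  proof -
    have "(n - 2) / n < 1" using n3' by simp
    then show ?thesis using m_lt by linarith
  qed
  have nm: "n - 2 - n * m > 0"
  proof -
    have "m * n < n - 2" using m_lt n3' by (simp add: field_simps)
    then show ?thesis by (simp add: algebra_simps)
  qed
  obtain i0 :: 'n where True by blast
  define e where "e = (axis i0 1 :: real^'n)"
  have ne: "norm e = 1" unfolding e_def by (rule norm_axis_1)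
  define v1 where "v1 = (\<lambda>t. partial i0 ?f (t *\<^sub>R e))"
  define v2 where "v2 = (\<lambda>t. partial i0 (partial i0 ?f) (t *\<^sub>R e))"
  have d1: "(v has_real_derivative v1 t) (at t)" if "t > 0" for t
    using v_deriv[OF C2 that, of i0] unfolding v1_def e_def .
  have d2: "(v1 has_real_derivative v2 t) (at t)" for t
    using v1_deriv[OF C2, of i0 t] unfolding v1_def v2_def e_def .
  have vpos: "v t > 0" if "t > 0" for t using v_pos that by simp
  define u1 where "u1 = (\<lambda>t. m * v t powr (m - 1) * v1 t)"
  define u2 where "u2 = (\<lambda>t. m * (m - 1) * v t powr (m - 2) * (v1 t)^2 + m * v t powr (m - 1) * v2 t)"
  have du: "((\<lambda>t. v t powr m) has_real_derivative u1 t) (at t)" if "t > 0" for t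
    using DERIV_fun_powr[OF d1[OF that] vpos[OF that], of m] unfolding u1_def by simp
  have du1: "(u1 has_real_derivative u2 t) (at t)" if "t > 0" for t
  proof -
    have "((\<lambda>t. m * (v t powr (m - 1) * v1 t)) has_real_derivative
        m * ((m - 1) * v t powr (m - 1 - real 1) * v1 t * v1 t + v2 t * v t powr (m - 1))) (at t)"
      by (rule DERIV_cmult[OF DERIV_mult[OF DERIV_fun_powr[OF d1[OF that] vpos[OF that]] d2]])
    moreover have "m - 1 - real 1 = m - 2" by simp
    ultimately show ?thesis unfolding u1_def u2_def
      by (simp add: algebra_simps power2_eq_square)
  qed
  have ode: "(n - 1) / m * (u2 t + (n - 1) / t * u1 t) + 2 * \<beta> / (1 - m) * v t + \<beta> * (t * v1 t) = 0"
    if t: "t > 0" for t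
  proof -
    define x where "x = t *\<^sub>R e"
    have nx: "norm x = t" unfolding x_def using ne t by simp
    have x0: "x \<noteq> 0" using nx t by auto
    have lap: "laplacian (\<lambda>y. v (norm y) powr m) x = u2 t + (real CARD('n) - 1) / norm x * u1 (norm x)"
      using radial_laplacian[of x "\<lambda>t. v t powr m" u1 "u2 t", OF x0 du] du1[OF t] nx by simp
    have rd: "radial_deriv ?f x = norm x * v1 t"
      using radial_rd[of x v "v1 t", OF x0] d1[OF t] nx by simp
    show ?thesis using pde[rule_format, of x] lap rd nx unfolding n_def by simp
  qed
  define a where "a = (\<lambda>s. 2 + (1 - m) * (exp s * v1 (exp s) / v (exp s)))"
  have wfun: "w = (\<lambda>s. (exp s)^2 * v (exp s) powr (1 - m))" using w_def by auto
  have N1: "n > 1" using n3' by simp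
  have ode': "(n - 1) / m * ((m * (m - 1) * v t powr (m - 2) * (v1 t)^2 + m * v t powr (m - 1) * v2 t)
        + (n - 1) / t * (m * v t powr (m - 1) * v1 t)) + 2 * \<beta> / (1 - m) * v t + \<beta> * (t * v1 t) = 0"
    if "t > 0" for t using ode[OF that] unfolding u1_def u2_def .
  note sys = s_system[of v v1 v2 m n \<beta>, OF vpos d1 d2 m_pos m1 N1 ode']
  have dw: "(w has_real_derivative w s * a s) (at s)" for s
    using sys(1)[of s] unfolding wfun a_def .
  have da: "(a has_real_derivative (- (m / (1 - m)) * (a s - 2)^2 - (n - 2) * (a s - 2) - \<beta> / (n - 1) * w s * a s)) (at s)" for s
    using sys(2)[of s] unfolding wfun a_def .
  have wpos: "w s > 0" for s unfolding wfun using vpos[of "exp s"] by simp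
  define Gf where "Gf = (\<lambda>r. (n - 1) / m * (r ^ (k - 1) * u1 r) + \<beta> * (r ^ k * v r))"
  define Gd where "Gd = (\<lambda>r. \<beta> * (n - 2 / (1 - m)) * (r ^ (k - 1) * v r))"
  have Gpos': "Gf r > 0" if r: "r > 0" for r
  proof (rule Gpos[of Gf Gd, OF _ _ _ r])
    fix r :: real assume r: "r > 0"
    have p1: "((\<lambda>r. r ^ (k - 1)) has_real_derivative (n - 1) * r ^ (k - 2)) (at r)"
    proof -
      have "((\<lambda>r. r ^ (k - 1)) has_real_derivative real (k - 1) * r ^ (k - 1 - Suc 0)) (at r)"
        by (rule DERIV_pow)
      moreover have "real (k - 1) = n - 1" "k - 1 - Suc 0 = k - 2" using k3 nk by auto
      ultimately show ?thesis by simp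
    qed
    have p2: "((\<lambda>r. r ^ k) has_real_derivative n * r ^ (k - 1)) (at r)"
      using DERIV_pow[of k r] nk by simp
    have "(Gf has_real_derivative (n - 1) / m * ((n - 1) * r ^ (k - 2) * u1 r + u2 r * r ^ (k - 1))
        + \<beta> * (n * r ^ (k - 1) * v r + v1 r * r ^ k)) (at r)"
      unfolding Gf_def
      by (intro DERIV_add DERIV_cmult DERIV_mult p1 p2 du1[OF r] d1[OF r])
    moreover have "(n - 1) / m * ((n - 1) * r ^ (k - 2) * u1 r + u2 r * r ^ (k - 1))
        + \<beta> * (n * r ^ (k - 1) * v r + v1 r * r ^ k) = Gd r"
    proof -
      note e1 = pow_k(1)[OF k3, of r] and e2 = pow_k(2)[OF k3, of r]
      have o: "(n - 1) / m * (u2 r + (n - 1) / r * u1 r) = - (2 * \<beta> / (1 - m) * v r + \<beta> * (r * v1 r))"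
        using ode[OF r] by linarith
      have "(n - 1) / m * ((n - 1) * r ^ (k - 2) * u1 r + u2 r * r ^ (k - 1))
          = r ^ (k - 2) * r * ((n - 1) / m * (u2 r + (n - 1) / r * u1 r))"
        unfolding e1 using r m_pos by (simp add: field_simps)
      also have "\<dots> = r ^ (k - 2) * r * (- (2 * \<beta> / (1 - m) * v r + \<beta> * (r * v1 r)))" unfolding o ..
      finally show ?thesis unfolding Gd_def e1 e2 using m1 by (simp add: field_simps)
    qed
    ultimately show "(Gf has_real_derivative Gd r) (at r)" by simp
  next
    fix r :: real assume r: "r > 0"
    have "n - 2 / (1 - m) > 0"
    proof -
      have "n * (1 - m) - 2 > 0" using nm by (simp add: algebra_simps)
      then show ?thesis using m1 by (simp add: field_simps)
    qed
    then show "Gd r > 0" unfolding Gd_def using beta_pos r vpos[OF r] by simp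
  next
    have cf: "isCont ?f 0" using C2 unfolding C2_UNIV_def by (simp add: differentiable_imp_continuous_within)
    have "((\<lambda>t. ?f (t *\<^sub>R e)) \<longlongrightarrow> ?f (0 *\<^sub>R e)) (at_right 0)"
      by (rule isCont_tendsto_compose) (use cf in simp, intro tendsto_intros)
    then have "((\<lambda>t. ?f (t *\<^sub>R e)) \<longlongrightarrow> lam) (at_right 0)" using v0 by simp
    moreover have "eventually (\<lambda>t. ?f (t *\<^sub>R e) = v t) (at_right 0)"
      unfolding eventually_at_right_less using ne by (auto intro!: eventually_at_rightI[of 0 1])
    ultimately have vlim: "(v \<longlongrightarrow> lam) (at_right 0)" by (rule Lim_transform_eventually)
    have "isCont v1 0" by (rule DERIV_isCont[OF d2])
    then have v1lim: "(v1 \<longlongrightarrow> v1 0) (at_right 0)"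
      unfolding isCont_def by (rule tendsto_within_subset) simp
    have "(Gf \<longlongrightarrow> (n - 1) / m * (0 ^ (k - 1) * (m * lam powr (m - 1) * v1 0)) + \<beta> * (0 ^ k * lam)) (at_right 0)"
      unfolding Gf_def u1_def using lambda_pos
      by (intro tendsto_intros vlim v1lim) auto
    moreover have "(n - 1) / m * (0 ^ (k - 1) * (m * lam powr (m - 1) * v1 0)) + \<beta> * (0 ^ k * lam) = (0::real)"
      using k3 by (simp add: power_0_left)
    ultimately show "(Gf \<longlongrightarrow> 0) (at_right 0)" by simp
  qed
  have G: "\<beta> / (n - 1) * w s > (1 + m / (1 - m)) * (2 - a s)" for s
  proof -
    define r where "r = exp s"
    have r: "r > 0" unfolding r_def by simp
    define V where "V = v r"
    have V: "V > 0" unfolding V_def using vpos r by simp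
    define Vm where "Vm = V powr m"
    have Vm: "Vm > 0" unfolding Vm_def using V by simp
    have p1: "V powr (m - 1) = Vm / V" unfolding Vm_def using V by (simp add: powr_diff)
    have p3: "V powr (1 - m) = V / Vm" unfolding Vm_def using V by (simp add: powr_diff)
    have "Gf r > 0" by (rule Gpos'[OF r])
    then have "(n - 1) / m * (r ^ (k - 1) * (m * (Vm / V) * v1 r)) + \<beta> * (r ^ k * V) > 0"
      unfolding Gf_def u1_def V_def[symmetric] p1 .
    moreover have "(n - 1) / m * (r ^ (k - 1) * (m * (Vm / V) * v1 r)) + \<beta> * (r ^ k * V)
        = r ^ (k - 2) * Vm * ((n - 1) * (r * v1 r / V) + \<beta> * (r * r * V / Vm))"
      unfolding pow_k[OF k3] using m_pos V Vm by (simp add: field_simps)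
    ultimately have "r ^ (k - 2) * Vm * ((n - 1) * (r * v1 r / V) + \<beta> * (r * r * V / Vm)) > 0"
      by simp
    moreover have "r ^ (k - 2) * Vm > 0" using r Vm by simp
    ultimately have X: "(n - 1) * (r * v1 r / V) + \<beta> * (r * r * V / Vm) > 0"
      using zero_less_mult_pos by blast
    have weq: "w s = r * r * V / Vm" unfolding wfun r_def[symmetric] V_def[symmetric] p3
      by (simp add: power2_eq_square)
    have aeq: "(1 + m / (1 - m)) * (2 - a s) = - (r * v1 r / V)"
      unfolding a_def r_def[symmetric] V_def[symmetric] using m1 V by (simp add: field_simps)
    define Q where "Q = \<beta> * (r * r * V / Vm)"
    define P where "P = r * v1 r / V"
    have "Q > (n - 1) * (- P)" using X unfolding Q_def P_def by linarith
    then have QP: "Q / (n - 1) > - P" using N1 pos_less_divide_eq[of "n - 1" "- P" Q] by (simp add: mult.commute)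
    have "\<beta> / (n - 1) * (r * r * V / Vm) = Q / (n - 1)" unfolding Q_def by simp
    with QP show ?thesis unfolding weq aeq P_def by simp
  qed
  have mu: "m / (1 - m) > 0" using m_pos m1 by simp
  have cpos: "\<beta> / (n - 1) > 0" using beta_pos N1 by simp
  have NK: "n - 2 - 2 * (m / (1 - m)) > 0"
  proof -
    have "n - 2 - 2 * (m / (1 - m)) = (n - 2 - n * m) / (1 - m)" using m1 by (simp add: field_simps)
    then show ?thesis using nm m1 by simp
  qed
  have lim0: "((\<lambda>s. s * (w s * a s - (2 * (n - 2) - 4 * (m / (1 - m))) / (\<beta> / (n - 1))))
      \<longlongrightarrow> - (n - 2 - 4 * (m / (1 - m))) / (\<beta> / (n - 1))) at_top"
    by (rule asym[OF mu cpos NK wpos dw da G])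
  define A0 where "A0 = 2 * (n - 1) * (n - 2 - n * m) / ((1 - m) * \<beta>)"
  define C where "C = - (n - 1) * (n - 2 - (n + 2) * m) / ((1 - m) * \<beta>)"
  have A0eq: "(2 * (n - 2) - 4 * (m / (1 - m))) / (\<beta> / (n - 1)) = A0"
    unfolding A0_def using m1 N1 beta_pos by (simp add: field_simps)
  have Ceq: "- (n - 2 - 4 * (m / (1 - m))) / (\<beta> / (n - 1)) = C"
    unfolding C_def using m1 N1 beta_pos by (simp add: field_simps)
  have lim1: "((\<lambda>s. s * (w s * a s - A0)) \<longlongrightarrow> C) at_top"
    using lim0 unfolding A0eq Ceq .
  have hfun: "h = (\<lambda>s. w s - A0 * s)" unfolding A0_def using h_def by auto
  have dh: "(h has_real_derivative w s * a s - A0) (at s)" for s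
    unfolding hfun using DERIV_diff[OF dw DERIV_cmult[OF DERIV_ident, of A0]] by simp
  have dh': "deriv h s = w s * a s - A0" for s by (rule DERIV_imp_deriv[OF dh])
  have part2: "((\<lambda>s. s * deriv h s) \<longlongrightarrow> C) at_top" unfolding dh' by (rule lim1)
  have part1: "((\<lambda>s. h s / ln s) \<longlongrightarrow> C) at_top"
  proof (rule lhospital_at_top_at_top[of ln "\<lambda>s. 1 / s" h "\<lambda>s. w s * a s - A0"])
    show "LIM x at_top. ln (x::real) :> at_top" by (rule ln_at_top)
    show "eventually (\<lambda>x. 1 / x \<noteq> (0::real)) at_top"
      using eventually_gt_at_top[of 0] by eventually_elim simp
    show "eventually (\<lambda>x. (h has_real_derivative w x * a x - A0) (at x)) at_top" using dh by simp
    show "eventually (\<lambda>x. (ln has_real_derivative 1 / x) (at x)) at_top"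
      using eventually_gt_at_top[of 0] by eventually_elim (rule DERIV_ln_divide)
    have "eventually (\<lambda>x. x * (w x * a x - A0) = (w x * a x - A0) / (1 / x)) at_top"
      using eventually_gt_at_top[of 0] by eventually_elim simp
    from Lim_transform_eventually[OF lim1 this]
    show "((\<lambda>x. (w x * a x - A0) / (1 / x)) \<longlongrightarrow> C) at_top" .
  qed
  show ?thesis using part1 part2 unfolding C_def by simp
qed

end
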